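(* Let $d,K\ge2$, $a^\dagger\in\{1,\dots,K\}$, and for each arm $a$ let $\hat\theta_a\in\mathbb{R}^d$, $V_a\in\mathbb{R}^{d\times d}$ symmetric positive definite, $\beta_a>0$, and $\mathcal C_a=\{\theta\in\mathbb{R}^d:\|\theta-\hat\theta_a\|_{V_a}\le\beta_a\}$. Fix $x^\dagger\in\mathbb{R}^d$ and $\xi>0$. The (convex) problem $$\min_{y\in\mathbb{R}^d}\ \|y\|_2\quad\text{s.t.}\quad \max_{a\neq a^\dagger}\ \max_{\theta\in\mathcal C_a}\ \langle x^\dagger+y,\ \theta-\hat\theta_{a^\dagger}\rangle\le-\xi$$ is feasible if and only if $\hat\theta_{a^\dagger}\notin\mathrm{Conv}\big(\bigcup_{a\neq a^\dagger}\mathcal C_a\big)$.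
   Context: $\|x\|_V=\sqrt{x^\top Vx}$; $\mathrm{Conv}$ denotes the convex hull. This is the convex relaxation of the attacker's problem of perturbing a single context $x^\dagger$ so that LinUCB (with confidence ellipsoids $\mathcal C_a$ centered at least-squares estimates $\hat\theta_a$) prefers arm $a^\dagger$ by margin $\xi$. *)

theory Defs
  imports "HOL-Analysis.Analysis"
begin

definition vnorm :: "real^'n^'n \<Rightarrow> real^'n \<Rightarrow> real" where
  "vnorm V x = sqrt (x \<bullet> (V *v x))"

definition sym_pos_def :: "real^'n^'n \<Rightarrow> bool" where
  "sym_pos_def V \<longleftrightarrow> transpose V = V \<and> (\<forall>x. x \<noteq> 0 \<longrightarrow> x \<bullet> (V *v x) > 0)"

definition conf_set :: "real^'n^'n \<Rightarrow> real^'n \<Rightarrow> real \<Rightarrow> (real^'n) set" where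
  "conf_set V th \<beta> = {\<theta>. vnorm V (\<theta> - th) \<le> \<beta>}"

end

theory Submission
  imports Defs
begin

lemma qscale: "((r::real) *\<^sub>R x) \<bullet> ((V::real^'n^'n) *v (r *\<^sub>R x)) = r^2 * (x \<bullet> (V *v x))"
  by (simp add: matrix_vector_mult_scaleR power2_eq_square)

lemma posdef_lower:
  assumes "sym_pos_def (V::real^'n^'n)"
  shows "\<exists>c>0. \<forall>x. c * (norm x)^2 \<le> x \<bullet> (V *v x)"
proof -
  have pos: "\<And>x. x \<noteq> 0 \<Longrightarrow> x \<bullet> (V *v x) > 0" using assms unfolding sym_pos_def_def by blast
  have cont: "continuous_on (sphere 0 1) (\<lambda>x::real^'n. x \<bullet> (V *v x))"
    by (intro continuous_intros)
  have ne: "sphere (0::real^'n) 1 \<noteq> {}"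
  proof -
    have "(axis undefined 1 :: real^'n) \<in> sphere 0 1" by (simp add: norm_axis_1)
    thus ?thesis by blast
  qed
  obtain x0 where x0: "x0 \<in> sphere 0 1" "\<And>y. y \<in> sphere 0 1 \<Longrightarrow> x0 \<bullet> (V *v x0) \<le> y \<bullet> (V *v y)"
    using continuous_attains_inf[OF compact_sphere ne cont] by blast
  have "x0 \<noteq> 0" using x0(1) by auto
  hence cpos: "x0 \<bullet> (V *v x0) > 0" by (rule pos)
  have "\<forall>x. (x0 \<bullet> (V *v x0)) * (norm x)^2 \<le> x \<bullet> (V *v x)"
  proof
    fix x :: "real^'n"
    show "(x0 \<bullet> (V *v x0)) * (norm x)^2 \<le> x \<bullet> (V *v x)"
    proof (cases "x = 0")
      case True thus ?thesis by simp
    next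
      case False
      define u where "u = (1 / norm x) *\<^sub>R x"
      have u: "u \<in> sphere 0 1" using False by (simp add: u_def)
      have xu: "x = norm x *\<^sub>R u" using False by (simp add: u_def)
      have "x \<bullet> (V *v x) = (norm x)^2 * (u \<bullet> (V *v u))"
        by (subst xu, subst xu, rule qscale)
      moreover have "x0 \<bullet> (V *v x0) \<le> u \<bullet> (V *v u)" using x0(2)[OF u] .
      ultimately show ?thesis using mult_right_mono[of "x0 \<bullet> (V *v x0)" "u \<bullet> (V *v u)" "(norm x)^2"] by (simp add: mult.commute)
    qed
  qed
  thus ?thesis using cpos by blast
qed

lemma conf_compact:
  assumes "sym_pos_def (V::real^'n^'n)"
  shows "compact (conf_set V th \<beta>)"
proof -
  obtain c where c: "c > 0" "\<And>x. c * (norm x)^2 \<le> x \<bullet> (V *v x)"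
    using posdef_lower[OF assms] by blast
  have cl: "closed (conf_set V th \<beta>)"
    unfolding conf_set_def vnorm_def matrix_vector_mult_diff_distrib
    by (intro closed_Collect_le continuous_intros)
  have "conf_set V th \<beta> \<subseteq> cball th (sqrt (\<bar>\<beta>\<bar>^2 / c))"
  proof
    fix t assume "t \<in> conf_set V th \<beta>"
    hence h: "sqrt ((t - th) \<bullet> (V *v (t - th))) \<le> \<beta>" by (simp add: conf_set_def vnorm_def)
    have q0: "0 \<le> (t - th) \<bullet> (V *v (t - th))"
    proof -
      have "0 \<le> c * (norm (t - th))^2" using c(1) by simp
      thus ?thesis using c(2)[of "t - th"] by linarith
    qed
    have "(t - th) \<bullet> (V *v (t - th)) \<le> \<beta>^2"
    proof -
      have s0: "0 \<le> sqrt ((t - th) \<bullet> (V *v (t - th)))" using q0 by simp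
      have "(sqrt ((t - th) \<bullet> (V *v (t - th))))^2 \<le> \<beta>^2" using power_mono[OF h s0, of 2] .
      thus ?thesis using q0 by simp
    qed
    hence "c * (norm (t - th))^2 \<le> \<bar>\<beta>\<bar>^2" using c(2)[of "t - th"] by simp
    hence "(norm (t - th))^2 \<le> \<bar>\<beta>\<bar>^2 / c" using c(1) by (simp add: pos_le_divide_eq mult.commute)
    hence "norm (t - th) \<le> sqrt (\<bar>\<beta>\<bar>^2 / c)" by (simp add: real_le_rsqrt)
    thus "t \<in> cball th (sqrt (\<bar>\<beta>\<bar>^2 / c))" by (simp add: dist_norm norm_minus_commute)
  qed
  hence "bounded (conf_set V th \<beta>)" using bounded_cball bounded_subset by blast
  thus ?thesis using cl by (simp add: compact_eq_bounded_closed)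
qed

theorem mainTheorem2:
  fixes K :: nat and adag :: nat
    and thhat :: "nat \<Rightarrow> real^'d" and V :: "nat \<Rightarrow> real^'d^'d" and \<beta> :: "nat \<Rightarrow> real"
    and xdag :: "real^'d" and \<xi> :: real
  assumes "CARD('d) \<ge> 2" and "K \<ge> 2" and "adag \<in> {1..K}"
    and "\<And>a. a \<in> {1..K} \<Longrightarrow> sym_pos_def (V a)"
    and "\<And>a. a \<in> {1..K} \<Longrightarrow> \<beta> a > 0"
    and "\<xi> > 0"
  shows "(\<exists>y :: real^'d. \<forall>a \<in> {1..K} - {adag}. \<forall>\<theta> \<in> conf_set (V a) (thhat a) (\<beta> a).
            (xdag + y) \<bullet> (\<theta> - thhat adag) \<le> - \<xi>)
         \<longleftrightarrow> thhat adag \<notin> convex hull (\<Union>a \<in> {1..K} - {adag}. conf_set (V a) (thhat a) (\<beta> a))"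
  (is "?L \<longleftrightarrow> ?R")
proof
  let ?S = "\<Union>a \<in> {1..K} - {adag}. conf_set (V a) (thhat a) (\<beta> a)"
  let ?p = "thhat adag"
  assume ?L
  then obtain y where y: "\<forall>a \<in> {1..K} - {adag}. \<forall>\<theta> \<in> conf_set (V a) (thhat a) (\<beta> a).
            (xdag + y) \<bullet> (\<theta> - ?p) \<le> - \<xi>" by blast
  let ?H = "{\<theta>. (xdag + y) \<bullet> (\<theta> - ?p) \<le> - \<xi>}"
  have "?S \<subseteq> ?H" using y by blast
  moreover have "?H = {\<theta>. (xdag + y) \<bullet> \<theta> \<le> (xdag + y) \<bullet> ?p - \<xi>}"
    by (auto simp: inner_diff_right)
  hence "convex ?H" by (simp add: convex_halfspace_le)
  ultimately have "convex hull ?S \<subseteq> ?H" by (rule hull_minimal)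
  moreover have "?p \<notin> ?H" using assms(6) by simp
  ultimately show ?R by blast
next
  let ?S = "\<Union>a \<in> {1..K} - {adag}. conf_set (V a) (thhat a) (\<beta> a)"
  let ?p = "thhat adag"
  assume R: ?R
  have "compact ?S"
  proof (rule compact_UN)
    show "finite ({1..K} - {adag})" by simp
  next
    fix a assume "a \<in> {1..K} - {adag}"
    hence "sym_pos_def (V a)" using assms(4) by blast
    thus "compact (conf_set (V a) (thhat a) (\<beta> a))" by (rule conf_compact)
  qed
  hence "compact (convex hull ?S)" by (rule compact_convex_hull)
  hence "closed (convex hull ?S)" by (rule compact_imp_closed)
  from separating_hyperplane_closed_point[OF convex_convex_hull this R]
  obtain w b where wb: "w \<bullet> ?p < b" "\<forall>x\<in>convex hull ?S. b < w \<bullet> x"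
    by blast
  define \<delta> where "\<delta> = b - w \<bullet> ?p"
  have dpos: "\<delta> > 0" using wb(1) by (simp add: \<delta>_def)
  define t where "t = \<xi> / \<delta>"
  have tpos: "t > 0" using dpos assms(6) by (simp add: t_def)
  show ?L
  proof (intro exI ballI)
    fix a \<theta> assume a: "a \<in> {1..K} - {adag}" and th: "\<theta> \<in> conf_set (V a) (thhat a) (\<beta> a)"
    have "\<theta> \<in> ?S" using a th by blast
    hence "\<theta> \<in> convex hull ?S" using hull_subset[of ?S convex] by blast
    hence "b < w \<bullet> \<theta>" using wb(2) by blast
    hence "\<delta> < w \<bullet> (\<theta> - ?p)" by (simp add: \<delta>_def inner_diff_right)
    hence "t * \<delta> < t * (w \<bullet> (\<theta> - ?p))" using tpos by simp
    moreover have "t * \<delta> = \<xi>" using dpos by (simp add: t_def)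
    ultimately show "(xdag + (- (t *\<^sub>R w) - xdag)) \<bullet> (\<theta> - ?p) \<le> - \<xi>" by simp
  qed
qed

end
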